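(* Let $A\in\mathsf{M}_n(\mathbb{C})$ be $h$-cyclic with consecutive partition $P=\{V_1,\dots,V_h\}$, so that $A$ has the block form in which the only possibly nonzero blocks are $A_{12},A_{23},\dots,A_{h-1,h},A_{h1}$. Then $A$ is singular if and only if at least one of the matrices $B_1,\dots,B_h$ is singular.
   Context: $P=\{V_1,\dots,V_h\}$ is a consecutive partition of $\{1,\dots,n\}$ into nonempty sets: $V_1=\{1,\dots,i_1\}$, $V_2=\{i_1+1,\dots,i_2\}$, \dots, $V_h=\{i_{h-1}+1,\dots,n\}$. $A_{ij}$ denotes the submatrix $A(V_i,V_j)$ with rows indexed by $V_i$ and columns by $V_j$. $A$ being $h$-cyclic with partition $P$ means $A_{ij}=0$ unless $j\equiv i+1\pmod h$. Let $\alpha$ be the permutation of $\{1,\dots,h\}$ given by $\alpha(i)=(i\bmod h)+1$. For $i\in\{1,\dots,h\}$ and $p\in\mathbb{N}$, $B_{ip}:=\prod_{j=h+1-p}^{h}A_{\alpha^{j-1}(i),\alpha^{j}(i)}$ (product taken in increasing order of $j$), and $B_i:=B_{ih}=A_{i,\alpha(i)}A_{\alpha(i),\alpha^2(i)}\cdots A_{\alpha^{h-1}(i),i}$, a square matrix of order $|V_i|$. *)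

theory Defs
  imports "Jordan_Normal_Form.Determinant"
begin

text \<open>A consecutive partition of the index set (0-based: rows/cols 0..n-1) into h blocks is
  given by breakpoints i 0 = 0 < i 1 < ... < i h = n; block V_k (k = 1..h) is {i(k-1) ..< i k}.\<close>

definition consec_partition :: "nat \<Rightarrow> nat \<Rightarrow> (nat \<Rightarrow> nat) \<Rightarrow> bool" where
  "consec_partition n h brk \<longleftrightarrow> brk 0 = 0 \<and> brk h = n \<and> strict_mono_on {0..h} brk"

definition blk_size :: "(nat \<Rightarrow> nat) \<Rightarrow> nat \<Rightarrow> nat" where
  "blk_size brk k = brk k - brk (k - 1)"

definition blk :: "'a mat \<Rightarrow> (nat \<Rightarrow> nat) \<Rightarrow> nat \<Rightarrow> nat \<Rightarrow> 'a mat" where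
  "blk A brk j k = mat (blk_size brk j) (blk_size brk k)
     (\<lambda>(r, c). A $$ (brk (j - 1) + r, brk (k - 1) + c))"

definition h_cyclic :: "'a::zero mat \<Rightarrow> nat \<Rightarrow> (nat \<Rightarrow> nat) \<Rightarrow> bool" where
  "h_cyclic A h brk \<longleftrightarrow> (\<forall>j\<in>{1..h}. \<forall>k\<in>{1..h}.
     k mod h \<noteq> (j + 1) mod h \<longrightarrow> blk A brk j k = 0\<^sub>m (blk_size brk j) (blk_size brk k))"

definition cyc_alpha :: "nat \<Rightarrow> nat \<Rightarrow> nat" where
  "cyc_alpha h i = (i mod h) + 1"

text \<open>B_{ip} = A_{\<alpha>^{h-p}(i),\<alpha>^{h-p+1}(i)} \<cdots> A_{\<alpha>^{h-1}(i),\<alpha>^h(i)}; we only need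
  B_i = B_{ih} = A_{i,\<alpha>(i)} A_{\<alpha>(i),\<alpha>^2(i)} \<cdots> A_{\<alpha>^{h-1}(i),i}, the product of the
  first m factors being cyc_prod A h brk i m.\<close>
fun cyc_prod :: "'a::comm_ring_1 mat \<Rightarrow> nat \<Rightarrow> (nat \<Rightarrow> nat) \<Rightarrow> nat \<Rightarrow> nat \<Rightarrow> 'a mat" where
  "cyc_prod A h brk i 0 = 1\<^sub>m (blk_size brk i)"
| "cyc_prod A h brk i (Suc m) = cyc_prod A h brk i m *
     blk A brk ((cyc_alpha h ^^ m) i) ((cyc_alpha h ^^ Suc m) i)"

definition B_mat :: "'a::comm_ring_1 mat \<Rightarrow> nat \<Rightarrow> (nat \<Rightarrow> nat) \<Rightarrow> nat \<Rightarrow> 'a mat" where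
  "B_mat A h brk i = cyc_prod A h brk i h"

end

theory Submission imports Defs begin


lemma brk_mono:
  assumes "consec_partition n h brk" "a \<le> b" "b \<le> h"
  shows "brk a \<le> brk b"
proof (cases "a = b")
  case False
  then show ?thesis using assms strict_mono_onD[of "{0..h}" brk a b]
    unfolding consec_partition_def by auto
qed simp

lemma brk_le_n:
  assumes "consec_partition n h brk" "k \<le> h"
  shows "brk k \<le> n"
  using brk_mono[OF assms(1) assms(2) order.refl] assms(1) unfolding consec_partition_def by auto

lemma brk_lt:
  assumes "consec_partition n h brk" "a < b" "b \<le> h"
  shows "brk a < brk b"
  using assms strict_mono_onD[of "{0..h}" brk a b] unfolding consec_partition_def by auto

lemma block_exists:
  assumes "consec_partition n h brk" "p < n"
  shows "\<exists>k\<in>{1..h}. brk (k-1) \<le> p \<and> p < brk k"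
proof -
  have "\<forall>p. m \<le> h \<longrightarrow> p < brk m \<longrightarrow> (\<exists>k\<in>{1..m}. brk (k-1) \<le> p \<and> p < brk k)" for m
  proof (induction m)
    case 0
    then show ?case using assms(1) unfolding consec_partition_def by auto
  next
    case (Suc m)
    show ?case
    proof (intro allI impI)
      fix p assume a: "Suc m \<le> h" "p < brk (Suc m)"
      show "\<exists>k\<in>{1..Suc m}. brk (k-1) \<le> p \<and> p < brk k"
      proof (cases "p < brk m")
        case True
        then show ?thesis using Suc a by fastforce
      next
        case False
        then show ?thesis using a by (intro bexI[of _ "Suc m"]) auto
      qed
    qed
  qed
  then show ?thesis using assms unfolding consec_partition_def by auto
qed

lemma block_unique:
  assumes "consec_partition n h brk" "k \<in> {1..h}" "k' \<in> {1..h}"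
    "brk (k-1) \<le> p" "p < brk k" "brk (k'-1) \<le> p" "p < brk k'"
  shows "k = k'"
proof (rule ccontr)
  assume "k \<noteq> k'"
  then consider "k < k'" | "k' < k" by linarith
  then show False
  proof cases
    case 1
    have "brk k \<le> brk (k'-1)" using 1 assms by (intro brk_mono[OF assms(1)]) auto
    then show False using assms by auto
  next
    case 2
    have "brk k' \<le> brk (k-1)" using 2 assms by (intro brk_mono[OF assms(1)]) auto
    then show False using assms by auto
  qed
qed

lemma blk_size_pos:
  assumes "consec_partition n h brk" "k \<in> {1..h}"
  shows "brk k = brk (k-1) + blk_size brk k"
  using brk_lt[OF assms(1), of "k-1" k] assms unfolding blk_size_def by auto

lemma alpha_in: "h \<ge> 1 \<Longrightarrow> cyc_alpha h i \<in> {1..h}"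
  unfolding cyc_alpha_def by (auto simp: Suc_le_eq)

lemma alpha_pow:
  assumes "h \<ge> 1" "i \<in> {1..h}"
  shows "(cyc_alpha h ^^ m) i = (i - 1 + m) mod h + 1"
proof (induction m)
  case 0
  then show ?case using assms by auto
next
  case (Suc m)
  have "(cyc_alpha h ^^ Suc m) i = cyc_alpha h ((cyc_alpha h ^^ m) i)" by simp
  also have "\<dots> = ((i - 1 + m) mod h + 1) mod h + 1"
    unfolding Suc by (simp add: cyc_alpha_def)
  also have "((i - 1 + m) mod h + 1) mod h = (i - 1 + Suc m) mod h"
    by (simp add: mod_Suc_eq)
  finally show ?case .
qed

lemma alpha_pow_in:
  assumes "h \<ge> 1" "i \<in> {1..h}"
  shows "(cyc_alpha h ^^ m) i \<in> {1..h}"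
  using alpha_pow[OF assms] assms by (auto simp: Suc_le_eq)

lemma alpha_h:
  assumes "h \<ge> 1" "i \<in> {1..h}"
  shows "(cyc_alpha h ^^ h) i = i"
  using alpha_pow[OF assms, of h] assms by auto

lemma alpha_inj:
  assumes "h \<ge> 1" "i \<in> {1..h}" "j \<in> {1..h}" "cyc_alpha h i = cyc_alpha h j"
  shows "i = j"
  using assms unfolding cyc_alpha_def
  by (cases "i = h"; cases "j = h") auto

lemma alpha_surj:
  assumes "h \<ge> 1" "k \<in> {1..h}"
  shows "\<exists>j\<in>{1..h}. cyc_alpha h j = k"
proof (cases "k = 1")
  case True
  then show ?thesis using assms by (intro bexI[of _ h]) (auto simp: cyc_alpha_def)
next
  case False
  then show ?thesis using assms by (intro bexI[of _ "k-1"]) (auto simp: cyc_alpha_def)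
qed

lemma hcyc_cond:
  assumes "h \<ge> 1" "j \<in> {1..h}" "k \<in> {1..h}" "k \<noteq> cyc_alpha h j"
  shows "k mod h \<noteq> (j + 1) mod h"
proof
  assume e: "k mod h = (j + 1) mod h"
  show False
  proof (cases "j = h")
    case True
    have "(j + 1) mod h = 1 mod h" unfolding True by (rule mod_add_self1)
    then have k1: "k mod h = 1 mod h" using e by simp
    show False
    proof (cases "h = 1")
      case True
      then show False using assms \<open>j = h\<close> by (auto simp: cyc_alpha_def)
    next
      case False
      then have "1 mod h = 1" using assms by auto
      moreover have "k mod h = (if k = h then 0 else k)" using assms by auto
      ultimately have "k = 1" using k1 by (auto split: if_splits)
      then show False using assms \<open>j = h\<close> by (auto simp: cyc_alpha_def)
    qed
  next
    case False
    then have "j + 1 \<le> h" using assms by auto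
    then show False using assms e False
      by (cases "k = h"; cases "j + 1 = h") (auto simp: cyc_alpha_def)
  qed
qed



lemma mat_vec_zero: "M \<in> carrier_mat a b \<Longrightarrow> M *\<^sub>v 0\<^sub>v b = 0\<^sub>v a"
  by (intro eq_vecI) (auto simp: scalar_prod_def)

lemma blk_carrier: "blk A brk j k \<in> carrier_mat (blk_size brk j) (blk_size brk k)"
  unfolding blk_def by simp

lemma A_zero_entry:
  assumes cp: "consec_partition n h brk" and h: "h \<ge> 1" and hc: "h_cyclic A h brk"
    and jk: "j \<in> {1..h}" "k \<in> {1..h}" "k \<noteq> cyc_alpha h j"
    and p: "brk (j-1) \<le> p" "p < brk j" and q: "brk (k-1) \<le> q" "q < brk k"
  shows "A $$ (p, q) = 0"
proof -
  have z: "blk A brk j k = 0\<^sub>m (blk_size brk j) (blk_size brk k)"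
    using hc hcyc_cond[OF h jk] jk unfolding h_cyclic_def by auto
  have pj: "p - brk (j-1) < blk_size brk j" using blk_size_pos[OF cp jk(1)] p by linarith
  have qk: "q - brk (k-1) < blk_size brk k" using blk_size_pos[OF cp jk(2)] q by linarith
  have "blk A brk j k $$ (p - brk (j-1), q - brk (k-1)) = 0" using z pj qk by simp
  then show ?thesis using pj qk p q unfolding blk_def by simp
qed

lemma cyc_prod_carrier:
  shows "cyc_prod A h brk i m \<in> carrier_mat (blk_size brk i) (blk_size brk ((cyc_alpha h ^^ m) i))"
proof (induction m)
  case 0
  then show ?case by simp
next
  case (Suc m)
  then show ?case using blk_carrier[of A brk "(cyc_alpha h ^^ m) i" "(cyc_alpha h ^^ Suc m) i"]
    by (simp del: funpow.simps)
qed

lemma B_to_P: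
  assumes h: "h \<ge> 1" and i: "i \<in> {1..h}"
  shows "v \<in> carrier_vec (blk_size brk ((cyc_alpha h ^^ m) i)) \<Longrightarrow> v \<noteq> 0\<^sub>v (blk_size brk ((cyc_alpha h ^^ m) i))
    \<Longrightarrow> cyc_prod A h brk i m *\<^sub>v v = 0\<^sub>v (blk_size brk i)
    \<Longrightarrow> \<exists>j\<in>{1..h}. \<exists>z\<in>carrier_vec (blk_size brk (cyc_alpha h j)).
          z \<noteq> 0\<^sub>v (blk_size brk (cyc_alpha h j)) \<and> blk A brk j (cyc_alpha h j) *\<^sub>v z = 0\<^sub>v (blk_size brk j)"
proof (induction m arbitrary: v)
  case 0
  then show ?case by simp
next
  case (Suc m)
  define j where "j = (cyc_alpha h ^^ m) i"
  have j: "j \<in> {1..h}" unfolding j_def using alpha_pow_in[OF h i] .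
  have aj: "(cyc_alpha h ^^ Suc m) i = cyc_alpha h j" unfolding j_def by simp
  define w where "w = blk A brk j (cyc_alpha h j) *\<^sub>v v"
  have wc: "w \<in> carrier_vec (blk_size brk j)" unfolding w_def using blk_carrier[of A brk j "cyc_alpha h j"] Suc.prems(1) aj
    by (metis mult_mat_vec_carrier)
  have "cyc_prod A h brk i (Suc m) = cyc_prod A h brk i m * blk A brk j (cyc_alpha h j)"
    unfolding j_def by (simp only: cyc_prod.simps funpow.simps comp_apply)
  then have e: "cyc_prod A h brk i m *\<^sub>v w = 0\<^sub>v (blk_size brk i)"
    using Suc.prems aj cyc_prod_carrier[of A h brk i m] blk_carrier[of A brk j "cyc_alpha h j"]
    unfolding w_def j_def by (simp del: funpow.simps)
  show ?case
  proof (cases "w = 0\<^sub>v (blk_size brk j)")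
    case True
    then show ?thesis using j Suc.prems aj unfolding w_def by (intro bexI[of _ j]) auto
  next
    case False
    then show ?thesis using Suc.IH[of w] wc e unfolding j_def by simp
  qed
qed

lemma P_to_B:
  fixes A :: "'a::idom mat"
  assumes h: "h \<ge> 1" and j: "j \<in> {1..h}"
    and z: "z \<in> carrier_vec (blk_size brk (cyc_alpha h j))" "z \<noteq> 0\<^sub>v (blk_size brk (cyc_alpha h j))"
    "blk A brk j (cyc_alpha h j) *\<^sub>v z = 0\<^sub>v (blk_size brk j)"
  shows "det (B_mat A h brk (cyc_alpha h j)) = 0"
proof -
  define i where "i = cyc_alpha h j"
  have i: "i \<in> {1..h}" unfolding i_def using alpha_in[OF h] .
  obtain m where m: "h = Suc m" using h by (cases h) auto
  have am: "(cyc_alpha h ^^ m) i = j"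
    using alpha_h[OF h j] unfolding i_def m by (simp add: funpow_Suc_right del: funpow.simps)
  have ah: "(cyc_alpha h ^^ Suc m) i = i"
    using alpha_h[OF h i] m by simp
  have B1: "B_mat A h brk i = cyc_prod A h brk i (Suc m)"
    unfolding B_mat_def by (simp only: m[symmetric])
  have B2: "cyc_prod A h brk i (Suc m) = cyc_prod A h brk i m * blk A brk ((cyc_alpha h ^^ m) i) ((cyc_alpha h ^^ Suc m) i)"
    by (simp only: cyc_prod.simps funpow.simps comp_apply)
  have B: "B_mat A h brk i = cyc_prod A h brk i m * blk A brk j i"
    by (simp only: B1 B2 am ah)
  have Bc: "B_mat A h brk i \<in> carrier_mat (blk_size brk i) (blk_size brk i)"
    unfolding B using cyc_prod_carrier[of A h brk i m] blk_carrier[of A brk j i] am by auto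
  have "B_mat A h brk i *\<^sub>v z = 0\<^sub>v (blk_size brk i)"
    unfolding B using cyc_prod_carrier[of A h brk i m] blk_carrier[of A brk j i] am z i_def
    by (simp add: mat_vec_zero)
  then have "det (B_mat A h brk i) = 0"
    using det_0_iff_vec_prod_zero[OF Bc] z unfolding i_def by blast
  then show ?thesis unfolding i_def .
qed



lemma sum_block:
  assumes cp: "consec_partition n h brk" and k: "k \<in> {1..h}"
    and z: "\<And>q. q < n \<Longrightarrow> \<not> (brk (k-1) \<le> q \<and> q < brk k) \<Longrightarrow> f q = 0"
  shows "(\<Sum>q\<in>{0..<n}. f q) = (\<Sum>c\<in>{0..<blk_size brk k}. f (brk (k-1) + c))"
proof -
  have bk: "brk k = brk (k-1) + blk_size brk k" using blk_size_pos[OF cp k] .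
  have kn: "brk k \<le> n" using brk_le_n[OF cp] k by auto
  have "(\<Sum>q\<in>{0..<n}. f q) = (\<Sum>q\<in>{brk (k-1)..<brk k}. f q)"
    by (rule sum.mono_neutral_right) (use kn z in auto)
  also have "\<dots> = (\<Sum>q\<in>{0 + brk (k-1)..<blk_size brk k + brk (k-1)}. f q)"
    using bk by (simp add: add.commute)
  also have "\<dots> = (\<Sum>c\<in>{0..<blk_size brk k}. f (c + brk (k-1)))"
    by (rule sum.shift_bounds_nat_ivl)
  finally show ?thesis by (simp add: add.commute)
qed

lemma Ax_to_P:
  assumes A: "A \<in> carrier_mat n n" and h: "h \<ge> 1" and cp: "consec_partition n h brk"
    and hc: "h_cyclic A h brk"
    and x: "x \<in> carrier_vec n" "x \<noteq> 0\<^sub>v n" "A *\<^sub>v x = 0\<^sub>v n"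
  shows "\<exists>j\<in>{1..h}. \<exists>z\<in>carrier_vec (blk_size brk (cyc_alpha h j)).
          z \<noteq> 0\<^sub>v (blk_size brk (cyc_alpha h j)) \<and> blk A brk j (cyc_alpha h j) *\<^sub>v z = 0\<^sub>v (blk_size brk j)"
proof -
  obtain p where p: "p < n" "x $ p \<noteq> 0" using x by (metis eq_vecI carrier_vecD index_zero_vec)
  obtain k where k: "k \<in> {1..h}" "brk (k-1) \<le> p" "p < brk k" using block_exists[OF cp p(1)] by auto
  obtain j where j: "j \<in> {1..h}" "cyc_alpha h j = k" using alpha_surj[OF h k(1)] by auto
  have bk: "brk k = brk (k-1) + blk_size brk k" using blk_size_pos[OF cp k(1)] .
  have bj: "brk j = brk (j-1) + blk_size brk j" using blk_size_pos[OF cp j(1)] .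
  have jn: "brk j \<le> n" using brk_le_n[OF cp] j by auto
  define z where "z = vec (blk_size brk k) (\<lambda>c. x $ (brk (k-1) + c))"
  have zc: "z \<in> carrier_vec (blk_size brk k)" unfolding z_def by simp
  have e: "brk (k-1) + (p - brk (k-1)) = p" using k(2) by simp
  have "z $ (p - brk (k-1)) \<noteq> 0" unfolding z_def using p k bk e by simp
  then have zn: "z \<noteq> 0\<^sub>v (blk_size brk k)" using k bk by auto
  have "blk A brk j k *\<^sub>v z = 0\<^sub>v (blk_size brk j)"
  proof (rule eq_vecI)
    fix r assume "r < dim_vec (0\<^sub>v (blk_size brk j))"
    then have r: "r < blk_size brk j" by simp
    define row where "row = brk (j-1) + r"
    have rn: "row < n" unfolding row_def using r bj jn by linarith
    have "0 = (A *\<^sub>v x) $ row" using x rn by simp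
    also have "\<dots> = (\<Sum>q\<in>{0..<n}. A $$ (row, q) * x $ q)"
      using A x(1) rn by (simp add: scalar_prod_def)
    also have "\<dots> = (\<Sum>c\<in>{0..<blk_size brk k}. A $$ (row, brk (k-1) + c) * x $ (brk (k-1) + c))"
    proof (rule sum_block[OF cp k(1)])
      fix q assume q: "q < n" "\<not> (brk (k-1) \<le> q \<and> q < brk k)"
      obtain k' where k': "k' \<in> {1..h}" "brk (k'-1) \<le> q" "q < brk k'" using block_exists[OF cp q(1)] by auto
      have "k' \<noteq> k" using q k' by auto
      then have "A $$ (row, q) = 0"
        using A_zero_entry[OF cp h hc j(1) k'(1)] j k' r bj unfolding row_def by auto
      then show "A $$ (row, q) * x $ q = 0" by simp
    qed
    also have "\<dots> = (blk A brk j k *\<^sub>v z) $ r"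
      using r unfolding blk_def z_def row_def by (simp add: scalar_prod_def)
    finally show "(blk A brk j k *\<^sub>v z) $ r = 0\<^sub>v (blk_size brk j) $ r" using r by simp
  qed (simp add: blk_def)
  then show ?thesis using j zc zn by auto
qed

lemma P_to_Ax:
  assumes A: "A \<in> carrier_mat n n" and h: "h \<ge> 1" and cp: "consec_partition n h brk"
    and hc: "h_cyclic A h brk"
    and j: "j \<in> {1..h}" and z: "z \<in> carrier_vec (blk_size brk (cyc_alpha h j))"
    "z \<noteq> 0\<^sub>v (blk_size brk (cyc_alpha h j))" "blk A brk j (cyc_alpha h j) *\<^sub>v z = 0\<^sub>v (blk_size brk j)"
  shows "\<exists>x. x \<in> carrier_vec n \<and> x \<noteq> 0\<^sub>v n \<and> A *\<^sub>v x = 0\<^sub>v n"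
proof -
  define k where "k = cyc_alpha h j"
  have k: "k \<in> {1..h}" unfolding k_def using alpha_in[OF h] .
  have bk: "brk k = brk (k-1) + blk_size brk k" using blk_size_pos[OF cp k] .
  have kn: "brk k \<le> n" using brk_le_n[OF cp] k by auto
  have bj: "brk j = brk (j-1) + blk_size brk j" using blk_size_pos[OF cp j] .
  define x where "x = vec n (\<lambda>q. if brk (k-1) \<le> q \<and> q < brk k then z $ (q - brk (k-1)) else 0)"
  obtain c where c: "c < blk_size brk k" "z $ c \<noteq> 0"
    using z unfolding k_def by (metis eq_vecI carrier_vecD index_zero_vec)
  have "x $ (brk (k-1) + c) \<noteq> 0" unfolding x_def using c bk kn by simp
  then have xn: "x \<noteq> 0\<^sub>v n" using c bk kn by auto
  have "A *\<^sub>v x = 0\<^sub>v n"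
  proof (rule eq_vecI)
    fix p assume "p < dim_vec (0\<^sub>v n)"
    then have p: "p < n" by simp
    obtain j' where j': "j' \<in> {1..h}" "brk (j'-1) \<le> p" "p < brk j'" using block_exists[OF cp p] by auto
    have bj': "brk j' = brk (j'-1) + blk_size brk j'" using blk_size_pos[OF cp j'(1)] .
    have "(A *\<^sub>v x) $ p = (\<Sum>q\<in>{0..<n}. A $$ (p, q) * x $ q)"
      using A p unfolding x_def by (simp add: scalar_prod_def)
    also have "\<dots> = (\<Sum>c\<in>{0..<blk_size brk k}. A $$ (p, brk (k-1) + c) * x $ (brk (k-1) + c))"
      by (rule sum_block[OF cp k]) (auto simp: x_def)
    also have "\<dots> = (\<Sum>c\<in>{0..<blk_size brk k}. A $$ (p, brk (k-1) + c) * z $ c)"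
      by (rule sum.cong) (use bk kn in \<open>auto simp: x_def\<close>)
    also have "\<dots> = 0"
    proof (cases "j' = j")
      case True
      have "(\<Sum>c\<in>{0..<blk_size brk k}. A $$ (p, brk (k-1) + c) * z $ c)
          = (blk A brk j k *\<^sub>v z) $ (p - brk (j-1))"
      proof -
        have pe: "brk (j-1) + (p - brk (j-1)) = p" using True j' by simp
        have pl: "p - brk (j-1) < blk_size brk j" using True j' bj' by auto
        show ?thesis using pe pl z(1) unfolding blk_def k_def by (simp add: scalar_prod_def)
      qed
      also have "\<dots> = 0" using z True j' bj' unfolding k_def by simp
      finally show ?thesis .
    next
      case False
      then have "k \<noteq> cyc_alpha h j'" using alpha_inj[OF h j'(1) j] unfolding k_def by auto
      then have "\<And>c. c < blk_size brk k \<Longrightarrow> A $$ (p, brk (k-1) + c) = 0"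
        using A_zero_entry[OF cp h hc j'(1) k] j' bk by auto
      then show ?thesis by simp
    qed
    finally show "(A *\<^sub>v x) $ p = 0\<^sub>v n $ p" using p by simp
  qed (use A in simp)
  moreover have "x \<in> carrier_vec n" unfolding x_def by simp
  ultimately show ?thesis using xn by blast
qed

theorem lemma5p1:
  fixes A :: "complex mat" and n h :: nat and brk :: "nat \<Rightarrow> nat"
  assumes "A \<in> carrier_mat n n"
    and "h \<ge> 1"
    and "consec_partition n h brk"
    and "h_cyclic A h brk"
  shows "det A = 0 \<longleftrightarrow> (\<exists>i\<in>{1..h}. det (B_mat A h brk i) = 0)"
proof
  assume "det A = 0"
  then obtain x where "x \<in> carrier_vec n" "x \<noteq> 0\<^sub>v n" "A *\<^sub>v x = 0\<^sub>v n"
    using det_0_iff_vec_prod_zero[OF assms(1)] by blast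
  from Ax_to_P[OF assms this] obtain j z where
    "j \<in> {1..h}" "z \<in> carrier_vec (blk_size brk (cyc_alpha h j))"
    "z \<noteq> 0\<^sub>v (blk_size brk (cyc_alpha h j))" "blk A brk j (cyc_alpha h j) *\<^sub>v z = 0\<^sub>v (blk_size brk j)"
    by blast
  then show "\<exists>i\<in>{1..h}. det (B_mat A h brk i) = 0"
    using P_to_B[OF assms(2)] alpha_in[OF assms(2)] by blast
next
  assume "\<exists>i\<in>{1..h}. det (B_mat A h brk i) = 0"
  then obtain i where i: "i \<in> {1..h}" "det (B_mat A h brk i) = 0" by auto
  have Bc: "B_mat A h brk i \<in> carrier_mat (blk_size brk i) (blk_size brk i)"
    using cyc_prod_carrier[of A h brk i h] alpha_h[OF assms(2) i(1)] unfolding B_mat_def by simp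
  obtain v where v: "v \<in> carrier_vec (blk_size brk i)" "v \<noteq> 0\<^sub>v (blk_size brk i)"
    "B_mat A h brk i *\<^sub>v v = 0\<^sub>v (blk_size brk i)"
    using det_0_iff_vec_prod_zero[OF Bc] i by blast
  have "\<exists>j\<in>{1..h}. \<exists>z\<in>carrier_vec (blk_size brk (cyc_alpha h j)).
          z \<noteq> 0\<^sub>v (blk_size brk (cyc_alpha h j)) \<and> blk A brk j (cyc_alpha h j) *\<^sub>v z = 0\<^sub>v (blk_size brk j)"
    using B_to_P[OF assms(2) i(1), where m=h and v=v and A=A and brk=brk] v alpha_h[OF assms(2) i(1)] unfolding B_mat_def by simp
  then obtain j z where "j \<in> {1..h}" "z \<in> carrier_vec (blk_size brk (cyc_alpha h j))"
    "z \<noteq> 0\<^sub>v (blk_size brk (cyc_alpha h j))" "blk A brk j (cyc_alpha h j) *\<^sub>v z = 0\<^sub>v (blk_size brk j)"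
    by blast
  from P_to_Ax[OF assms this] show "det A = 0"
    using det_0_iff_vec_prod_zero[OF assms(1)] by blast
qed


end
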